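(* Let $\overline{C}(\alpha,N)$ and $\overline{C}(\alpha)$ be as defined in the context. Then: (1) For real $0\le\alpha\le2$, $\overline{C}(\alpha,1)=0$ and $\overline{C}(\alpha,2)=1$. (2) For real $0\le\alpha\le2$ and positive integers $N$, $\overline{C}(\alpha,N)\le\overline{C}(\alpha,N+1)$. (3) For real $0\le\alpha\le2$ and positive integers $N$, $0\le\overline{C}(\alpha,N)\le N-1$. (4) For real $0\le\alpha\le2$, $\overline{C}(\alpha)=\lim_{N\to\infty}\overline{C}(\alpha,N)$.
   Context: For a strictly increasing sequence $(\lambda_k)_{k=-\infty}^{\infty}$ of real numbers, put $\delta_k:=\min\{\lambda_k-\lambda_{k-1},\lambda_{k+1}-\lambda_k\}$. For $0\le\alpha\le2$ and a positive integer $N$, let $\overline{C}(\alpha,N)$ be the minimum of all constants $C(\alpha,N)$ such that $$\sum_{m=1}^N\sum_{\substack{n=1\\ n\ne m}}^N\frac{\delta_m^{2-\alpha}\delta_n^{\alpha}t_mt_n}{(\lambda_m-\lambda_n)^2}\le C(\alpha,N)\sum_{n=1}^N t_n^2$$ holds for every strictly increasing real sequence $(\lambda_k)_{k\in\mathbb Z}$ and all nonnegative reals $t_1,\dots,t_N$. Let $\overline{C}(\alpha)$ be the minimum of all constants $C(\alpha)$ for which the same inequality (with $C(\alpha)$ in place of $C(\alpha,N)$) holds for every positive integer $N$, every such sequence and all nonnegative $t_1,\dots,t_N$; set $\overline{C}(\alpha)=\infty$ if no such real constant exists. *)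

theory Defs
  imports "HOL-Analysis.Analysis"
begin

definition gap :: "(int \<Rightarrow> real) \<Rightarrow> int \<Rightarrow> real" where
  "gap lam k = min (lam k - lam (k - 1)) (lam (k + 1) - lam k)"

definition hilbert_lhs :: "real \<Rightarrow> nat \<Rightarrow> (int \<Rightarrow> real) \<Rightarrow> (nat \<Rightarrow> real) \<Rightarrow> real" where
  "hilbert_lhs \<alpha> N lam t =
     (\<Sum>m\<in>{1..N}. \<Sum>n\<in>{1..N} - {m}.
        gap lam (int m) powr (2 - \<alpha>) * gap lam (int n) powr \<alpha> * t m * t n
        / (lam (int m) - lam (int n))^2)"

definition admissible_const :: "real \<Rightarrow> nat \<Rightarrow> real \<Rightarrow> bool" where
  "admissible_const \<alpha> N C \<longleftrightarrow>
     (\<forall>lam :: int \<Rightarrow> real. strict_mono lam \<longrightarrow>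
       (\<forall>t :: nat \<Rightarrow> real. (\<forall>n\<in>{1..N}. 0 \<le> t n) \<longrightarrow>
          hilbert_lhs \<alpha> N lam t \<le> C * (\<Sum>n\<in>{1..N}. (t n)^2)))"

definition Cbar :: "real \<Rightarrow> nat \<Rightarrow> real" where
  "Cbar \<alpha> N = Inf {C. admissible_const \<alpha> N C}"

text \<open>The uniform constant, extended-real valued; equal to infinity if no real constant works.\<close>
definition Cbar_inf :: "real \<Rightarrow> ereal" where
  "Cbar_inf \<alpha> = Inf (ereal ` {C. \<forall>N\<ge>1. admissible_const \<alpha> N C})"

end

theory Submission
  imports Defs
begin

lemma gap_pos: assumes "strict_mono lam" shows "0 < gap lam k"
  using strict_monoD[OF assms, of "k-1" k] strict_monoD[OF assms, of k "k+1"]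
  by (simp add: gap_def)

lemma gap_le: assumes sm: "strict_mono (lam::int\<Rightarrow>real)" and "m \<noteq> n"
  shows "gap lam m \<le> \<bar>lam m - lam n\<bar>"
proof (cases "m < n")
  case True
  have "lam (m+1) \<le> lam n" using True sm by (simp add: strict_mono_less_eq)
  moreover have "lam m < lam n" using True sm by (simp add: strict_mono_less)
  ultimately show ?thesis by (simp add: gap_def)
next
  case False
  then have "n < m" using assms by simp
  then have "lam n \<le> lam (m-1)" "lam n < lam m" using sm by (simp_all add: strict_mono_less_eq strict_mono_less)
  then show ?thesis by (simp add: gap_def)
qed

lemma term_le:
  assumes sm: "strict_mono (lam::int\<Rightarrow>real)" and mn: "m \<noteq> n" and a0: "0 \<le> \<alpha>" and a2: "\<alpha> \<le> 2"
    and "0 \<le> a" and "0 \<le> b"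
  shows "gap lam m powr (2-\<alpha>) * gap lam n powr \<alpha> * a * b / (lam m - lam n)^2 \<le> a * b"
proof -
  define d where "d = \<bar>lam m - lam n\<bar>"
  have "lam m \<noteq> lam n" using sm mn by (metis strict_mono_eq)
  then have d0: "0 < d" by (simp add: d_def)
  have g1: "gap lam m \<le> d" using gap_le[OF sm mn] d_def by simp
  have g2: "gap lam n \<le> d" using gap_le[OF sm, of n m] mn d_def by (simp add: abs_minus_commute)
  have p1: "gap lam m powr (2-\<alpha>) \<le> d powr (2-\<alpha>)"
    by (rule powr_mono2) (use a2 g1 gap_pos[OF sm] in \<open>auto simp: less_imp_le\<close>)
  have p2: "gap lam n powr \<alpha> \<le> d powr \<alpha>"
    by (rule powr_mono2) (use a0 g2 gap_pos[OF sm] in \<open>auto simp: less_imp_le\<close>)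
  have "gap lam m powr (2-\<alpha>) * gap lam n powr \<alpha> \<le> d powr (2-\<alpha>) * d powr \<alpha>"
    by (rule mult_mono[OF p1 p2]) auto
  also have "\<dots> = d^2" using d0 by (simp add: powr_add[symmetric])
  also have "\<dots> = (lam m - lam n)^2" by (simp add: d_def)
  finally have P: "gap lam m powr (2-\<alpha>) * gap lam n powr \<alpha> \<le> (lam m - lam n)^2" .
  have dd: "0 < (lam m - lam n)^2" using d0 d_def by simp
  have "gap lam m powr (2-\<alpha>) * gap lam n powr \<alpha> * (a * b) \<le> (lam m - lam n)^2 * (a*b)"
    by (rule mult_right_mono[OF P]) (use assms in simp)
  then show ?thesis using dd by (simp add: divide_le_eq mult_ac)
qed

lemma lhs_nonneg:
  assumes sm: "strict_mono lam" and t: "\<forall>n\<in>{1..N}. 0 \<le> t n"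
  shows "0 \<le> hilbert_lhs \<alpha> N lam t"
  unfolding hilbert_lhs_def
  by (intro sum_nonneg) (use t in auto)

lemma cross_sum:
  assumes "finite S" and t: "\<forall>n\<in>S. 0 \<le> t n"
  shows "(\<Sum>m\<in>S. \<Sum>n\<in>S - {m}. t m * t n) \<le> (real (card S) - 1) * (\<Sum>n\<in>S. (t n)^2)"
proof -
  have "(\<Sum>m\<in>S. \<Sum>n\<in>S - {m}. t m * t n) \<le> (\<Sum>m\<in>S. \<Sum>n\<in>S - {m}. ((t m)^2 + (t n)^2)/2)"
  proof (intro sum_mono)
    fix m n
    have "2 * t m * t n \<le> (t m)^2 + (t n)^2" by (rule sum_squares_bound)
    then show "t m * t n \<le> ((t m)^2 + (t n)^2)/2" by (simp add: field_simps)
  qed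
  also have "\<dots> = (\<Sum>m\<in>S. (real (card S) - 1) * (t m)^2/2 + ((\<Sum>n\<in>S. (t n)^2) - (t m)^2)/2)"
  proof (rule sum.cong[OF refl])
    fix m assume m: "m \<in> S"
    have "(\<Sum>n\<in>S - {m}. ((t m)^2 + (t n)^2)/2) = (\<Sum>n\<in>S - {m}. (t m)^2/2) + (\<Sum>n\<in>S - {m}. (t n)^2)/2"
      by (simp add: sum.distrib add_divide_distrib sum_divide_distrib)
    also have "\<dots> = real (card S - 1) * (t m)^2/2 + ((\<Sum>n\<in>S. (t n)^2) - (t m)^2)/2"
      using m assms(1) by (simp add: sum_diff1)
    also have "real (card S - 1) = real (card S) - 1" using m assms(1)
      by (metis One_nat_def card_gt_0_iff empty_iff of_nat_diff Suc_leI of_nat_1)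
    finally show "(\<Sum>n\<in>S - {m}. ((t m)^2 + (t n)^2)/2) = (real (card S) - 1) * (t m)^2/2 + ((\<Sum>n\<in>S. (t n)^2) - (t m)^2)/2" .
  qed
  also have "\<dots> = (real (card S) - 1) * (\<Sum>n\<in>S. (t n)^2)"
    by (simp add: sum.distrib sum_divide_distrib[symmetric] sum_subtractf sum_distrib_left[symmetric] field_simps)
  finally show ?thesis .
qed


lemma card_sum_le_aux: "real (card {1..N}) = real N" by simp

context fixes \<alpha> :: real assumes a0: "0 \<le> \<alpha>" and a2: "\<alpha> \<le> 2"
begin

lemma adm_top: "admissible_const \<alpha> N (real N - 1)"
  unfolding admissible_const_def
proof (intro allI impI)
  fix lam :: "int \<Rightarrow> real" and t :: "nat \<Rightarrow> real"
  assume sm: "strict_mono lam" and t: "\<forall>n\<in>{1..N}. 0 \<le> t n"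
  have "hilbert_lhs \<alpha> N lam t \<le> (\<Sum>m\<in>{1..N}. \<Sum>n\<in>{1..N} - {m}. t m * t n)"
    unfolding hilbert_lhs_def
  proof (intro sum_mono)
    fix m n assume m: "m \<in> {1..N}" and n: "n \<in> {1..N} - {m}"
    have "int m \<noteq> int n" using n by auto
    from term_le[OF sm this a0 a2, of "t m" "t n"] m n t
    show "gap lam (int m) powr (2 - \<alpha>) * gap lam (int n) powr \<alpha> * t m * t n / (lam (int m) - lam (int n))\<^sup>2 \<le> t m * t n"
      by auto
  qed
  also have "\<dots> \<le> (real (card {1..N}) - 1) * (\<Sum>n\<in>{1..N}. (t n)^2)"
    by (rule cross_sum) (use t in auto)
  finally show "hilbert_lhs \<alpha> N lam t \<le> (real N - 1) * (\<Sum>n\<in>{1..N}. (t n)^2)" by simp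
qed

lemma sm_id: "strict_mono (real_of_int)"
  by (simp add: strict_mono_def)

lemma adm_nonneg: assumes "N \<ge> 1" "admissible_const \<alpha> N C" shows "0 \<le> C"
proof -
  define t :: "nat \<Rightarrow> real" where "t = (\<lambda>k. if k = 1 then 1 else 0)"
  have t0: "\<forall>n\<in>{1..N}. 0 \<le> t n" by (simp add: t_def)
  have "(\<Sum>n\<in>{1..N}. (t n)^2) = (\<Sum>n\<in>{1..N}. if n = 1 then 1 else 0)"
    by (rule sum.cong) (auto simp: t_def)
  also have "\<dots> = 1" using assms(1) by simp
  finally have S: "(\<Sum>n\<in>{1..N}. (t n)^2) = 1" .
  have "0 \<le> hilbert_lhs \<alpha> N real_of_int t" by (rule lhs_nonneg[OF sm_id t0])
  also have "\<dots> \<le> C * 1" using assms(2) t0 sm_id S unfolding admissible_const_def by metis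
  finally show ?thesis by simp
qed

lemma adm_mono: assumes "admissible_const \<alpha> N C" "C \<le> C'" shows "admissible_const \<alpha> N C'"
  unfolding admissible_const_def
proof (intro allI impI)
  fix lam :: "int \<Rightarrow> real" and t :: "nat \<Rightarrow> real"
  assume sm: "strict_mono lam" and t: "\<forall>n\<in>{1..N}. 0 \<le> t n"
  have "hilbert_lhs \<alpha> N lam t \<le> C * (\<Sum>n\<in>{1..N}. (t n)^2)" using assms(1) sm t unfolding admissible_const_def by blast
  also have "\<dots> \<le> C' * (\<Sum>n\<in>{1..N}. (t n)^2)" by (rule mult_right_mono[OF assms(2)]) (simp add: sum_nonneg)
  finally show "hilbert_lhs \<alpha> N lam t \<le> C' * (\<Sum>n\<in>{1..N}. (t n)^2)" .
qed

lemma bdd: assumes "N \<ge> 1" shows "bdd_below {C. admissible_const \<alpha> N C}"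
  using adm_nonneg[OF assms] by (auto simp: bdd_below_def)

lemma Cbar_le: assumes "N \<ge> 1" "admissible_const \<alpha> N C" shows "Cbar \<alpha> N \<le> C"
  unfolding Cbar_def by (rule cInf_lower) (use assms bdd in auto)

lemma Cbar_nonneg: assumes "N \<ge> 1" shows "0 \<le> Cbar \<alpha> N"
  unfolding Cbar_def by (rule cInf_greatest) (use adm_top adm_nonneg[OF assms] in auto)

lemma adm_Cbar: assumes "N \<ge> 1" shows "admissible_const \<alpha> N (Cbar \<alpha> N)"
  unfolding admissible_const_def
proof (intro allI impI)
  fix lam :: "int \<Rightarrow> real" and t :: "nat \<Rightarrow> real"
  assume sm: "strict_mono lam" and t: "\<forall>n\<in>{1..N}. 0 \<le> t n"
  define S where "S = (\<Sum>n\<in>{1..N}. (t n)^2)"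
  have S0: "0 \<le> S" by (simp add: S_def sum_nonneg)
  have H: "\<And>C. admissible_const \<alpha> N C \<Longrightarrow> hilbert_lhs \<alpha> N lam t \<le> C * S"
    using sm t unfolding admissible_const_def S_def by blast
  show "hilbert_lhs \<alpha> N lam t \<le> Cbar \<alpha> N * (\<Sum>n\<in>{1..N}. (t n)^2)"
  proof (cases "S = 0")
    case True
    then show ?thesis using H[OF adm_top] S_def by simp
  next
    case False
    then have Sp: "0 < S" using S0 by simp
    have "hilbert_lhs \<alpha> N lam t / S \<le> Cbar \<alpha> N"
      unfolding Cbar_def
    proof (rule cInf_greatest)
      show "{C. admissible_const \<alpha> N C} \<noteq> {}" using adm_top by auto
      fix C assume "C \<in> {C. admissible_const \<alpha> N C}"
      then show "hilbert_lhs \<alpha> N lam t / S \<le> C" using H Sp by (simp add: divide_le_eq)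
    qed
    then show ?thesis using Sp S_def by (simp add: divide_le_eq)
  qed
qed

lemma adm_iff: assumes "N \<ge> 1" shows "admissible_const \<alpha> N C \<longleftrightarrow> Cbar \<alpha> N \<le> C"
  using Cbar_le[OF assms] adm_mono adm_Cbar[OF assms] by blast

end

lemma hilbert_ext:
  "hilbert_lhs \<alpha> (Suc N) lam (t(Suc N := 0)) = hilbert_lhs \<alpha> N lam t"
proof -
  define t' where "t' = t(Suc N := 0)"
  define f where "f = (\<lambda>tt m n. gap lam (int m) powr (2 - \<alpha>) * gap lam (int n) powr \<alpha> * tt m * tt n
        / (lam (int m) - lam (int n))^2)"
  have I: "{1..Suc N} = insert (Suc N) {1..N}" by auto
  have A: "(\<Sum>n\<in>{1..Suc N} - {Suc N}. f t' (Suc N) n) = 0"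
    by (simp add: f_def t'_def)
  have B: "(\<Sum>n\<in>{1..Suc N} - {m}. f t' m n) = (\<Sum>n\<in>{1..N} - {m}. f t m n)" if m: "m \<in> {1..N}" for m
  proof -
    have D: "{1..Suc N} - {m} = insert (Suc N) ({1..N} - {m})" using m by auto
    have "(\<Sum>n\<in>{1..Suc N} - {m}. f t' m n) = f t' m (Suc N) + (\<Sum>n\<in>{1..N} - {m}. f t' m n)"
      unfolding D by (subst sum.insert) auto
    also have "\<dots> = (\<Sum>n\<in>{1..N} - {m}. f t m n)"
      using m by (auto simp: f_def t'_def intro!: sum.cong)
    finally show ?thesis .
  qed
  have "hilbert_lhs \<alpha> (Suc N) lam t' = (\<Sum>m\<in>{1..Suc N}. \<Sum>n\<in>{1..Suc N} - {m}. f t' m n)"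
    unfolding hilbert_lhs_def f_def ..
  also have "\<dots> = (\<Sum>n\<in>{1..Suc N} - {Suc N}. f t' (Suc N) n) + (\<Sum>m\<in>{1..N}. \<Sum>n\<in>{1..Suc N} - {m}. f t' m n)"
    unfolding I by (subst sum.insert) auto
  also have "\<dots> = (\<Sum>m\<in>{1..N}. \<Sum>n\<in>{1..N} - {m}. f t m n)"
    using A B by simp
  also have "\<dots> = hilbert_lhs \<alpha> N lam t"
    unfolding hilbert_lhs_def f_def ..
  finally show ?thesis unfolding t'_def .
qed


lemma adm_Suc: assumes "admissible_const \<alpha> (Suc N) C" shows "admissible_const \<alpha> N C"
  unfolding admissible_const_def
proof (intro allI impI)
  fix lam :: "int \<Rightarrow> real" and t :: "nat \<Rightarrow> real"
  assume sm: "strict_mono lam" and t: "\<forall>n\<in>{1..N}. 0 \<le> t n"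
  define t' where "t' = t(Suc N := 0)"
  have t': "\<forall>n\<in>{1..Suc N}. 0 \<le> t' n" using t by (auto simp: t'_def)
  have I: "{1..Suc N} = insert (Suc N) {1..N}" by auto
  have S: "(\<Sum>n\<in>{1..Suc N}. (t' n)^2) = (\<Sum>n\<in>{1..N}. (t n)^2)"
    unfolding I by (subst sum.insert) (auto simp: t'_def intro!: sum.cong)
  have "hilbert_lhs \<alpha> N lam t = hilbert_lhs \<alpha> (Suc N) lam t'"
    unfolding t'_def by (rule hilbert_ext[symmetric])
  also have "\<dots> \<le> C * (\<Sum>n\<in>{1..Suc N}. (t' n)^2)"
    using assms sm t' unfolding admissible_const_def by blast
  finally show "hilbert_lhs \<alpha> N lam t \<le> C * (\<Sum>n\<in>{1..N}. (t n)^2)" using S by simp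
qed

lemma two_val: "hilbert_lhs \<alpha> 2 real_of_int (\<lambda>_. 1) = 2"
proof -
  have e: "{1..2::nat} = {1,2}" "{1,2::nat} - {1} = {2}" "{1,2::nat} - {2} = {1}" by auto
  show ?thesis unfolding hilbert_lhs_def gap_def e by (simp add: insert_Diff_if)
qed

theorem proposition2:
  fixes \<alpha> :: real
  assumes "0 \<le> \<alpha>" and "\<alpha> \<le> 2"
  shows "Cbar \<alpha> 1 = 0 \<and> Cbar \<alpha> 2 = 1
    \<and> (\<forall>N\<ge>1. Cbar \<alpha> N \<le> Cbar \<alpha> (N + 1))
    \<and> (\<forall>N\<ge>1. 0 \<le> Cbar \<alpha> N \<and> Cbar \<alpha> N \<le> real N - 1)
    \<and> ((\<lambda>N. ereal (Cbar \<alpha> N)) \<longlonglongrightarrow> Cbar_inf \<alpha>)"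
proof -
  note top = adm_top[OF assms]
  note nn = Cbar_nonneg[OF assms]
  note le = Cbar_le[OF assms]
  note ac = adm_Cbar[OF assms]
  note iff = adm_iff[OF assms]
  have P3: "\<forall>N\<ge>1. 0 \<le> Cbar \<alpha> N \<and> Cbar \<alpha> N \<le> real N - 1"
    using nn le top by blast
  have P1: "Cbar \<alpha> 1 = 0" using P3 by force
  have P2: "Cbar \<alpha> 2 = 1"
  proof -
    have "Cbar \<alpha> 2 \<le> 1" using P3[rule_format, of 2] by simp
    moreover have "hilbert_lhs \<alpha> 2 real_of_int (\<lambda>_. 1) \<le> Cbar \<alpha> 2 * (\<Sum>n\<in>{1..2::nat}. ((\<lambda>_. 1::real) n)^2)"
      by (rule ac[of 2, unfolded admissible_const_def, rule_format, OF _ sm_id[OF assms]]) simp_all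
    then have "2 \<le> Cbar \<alpha> 2 * 2" using two_val by simp
    ultimately show ?thesis by simp
  qed
  have mono: "Cbar \<alpha> N \<le> Cbar \<alpha> (N + 1)" if "N \<ge> 1" for N
    using le[OF that adm_Suc[OF ac]] that by simp
  define X where "X = (\<lambda>N. ereal (Cbar \<alpha> (Suc N)))"
  have incX: "incseq X" unfolding X_def
    by (rule incseq_SucI) (use mono in simp)
  define M where "M = (SUP N. X N)"
  have lim: "X \<longlonglongrightarrow> M" unfolding M_def by (rule LIMSEQ_SUP[OF incX])
  have "X 0 \<le> M" unfolding M_def by (rule SUP_upper) simp
  then have Mne: "M \<noteq> -\<infinity>" by (auto simp: X_def)
  have "Cbar_inf \<alpha> = M"
  proof (rule antisym)
    let ?B = "{C. \<forall>N\<ge>1. admissible_const \<alpha> N C}"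
    show "Cbar_inf \<alpha> \<le> M"
    proof (cases M)
      case (real s)
      have "s \<in> ?B"
      proof (intro CollectI allI impI)
        fix N :: nat assume N: "N \<ge> 1"
        then obtain k where k: "N = Suc k" by (cases N) auto
        have "X k \<le> M" unfolding M_def by (rule SUP_upper) simp
        then have "Cbar \<alpha> N \<le> s" using real k by (simp add: X_def)
        then show "admissible_const \<alpha> N s" using iff[OF N] by simp
      qed
      then show ?thesis unfolding Cbar_inf_def using real by (auto intro: Inf_lower)
    qed (use Mne in auto)
    show "M \<le> Cbar_inf \<alpha>"
      unfolding Cbar_inf_def M_def
    proof (rule Inf_greatest)
      fix y assume "y \<in> ereal ` ?B"
      then obtain C where C: "C \<in> ?B" and y: "y = ereal C" by auto
      show "(SUP N. X N) \<le> y"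
      proof (rule SUP_least)
        fix N
        have "admissible_const \<alpha> (Suc N) C" using C by simp
        then show "X N \<le> y" using iff[of "Suc N"] by (simp add: X_def y)
      qed
    qed
  qed
  then have "X \<longlonglongrightarrow> Cbar_inf \<alpha>" using lim by simp
  then have L: "(\<lambda>N. ereal (Cbar \<alpha> N)) \<longlonglongrightarrow> Cbar_inf \<alpha>"
    unfolding X_def by (rule LIMSEQ_imp_Suc)
  show ?thesis using P1 P2 P3 mono L by blast
qed

end
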